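(* HyperLTL and LTL under synchronous team semantics are of incomparable expressiveness (there is a HyperLTL sentence not equivalent to any LTL formula under $\models_s$, and an LTL formula under $\models_s$ not equivalent to any HyperLTL sentence), and HyperLTL is strictly more expressive than LTL under asynchronous team semantics (every LTL formula under $\models_a$ is equivalent to some HyperLTL sentence, but some HyperLTL sentence is equivalent to no LTL formula under $\models_a$). Here a HyperLTL sentence $\phi$ and an LTL formula $\varphi$ are equivalent under $\models_\star$ if $T\models\phi\iff T\models_\star\varphi$ for every team $T$.
   Context: Fix a finite set $AP$. Traces are elements of $(2^{AP})^\omega$, $t[i,\infty)=t(i)t(i+1)\cdots$; teams are sets of traces, $T[i,\infty)=\{t[i,\infty):t\in T\}$, $T[k]=\{t[k(t),\infty):t\in T\}$ for $k:T\to\mathbb N$. LTL formulas: $\varphi::=p\mid\neg p\mid\varphi\wedge\varphi\mid\varphi\vee\varphi\mid X\varphi\mid F\varphi\mid G\varphi\mid\varphi U\varphi\mid\varphi R\varphi$. Team semantics $\models_\star$, $\star\in\{a,s\}$: $T\models_\star p$ iff $p\in t(0)$ for all $t\in T$; $T\models_\star\neg p$ iff $p\notin t(0)$ for all $t\in T$; $\wedge$ conjunctive; $T\models_\star\psi\vee\varphi$ iff $T=T_1\cup T_2$ with $T_1\models_\star\psi$, $T_2\models_\star\varphi$; $T\models_\star X\varphi$ iff $T[1,\infty)\models_\star\varphi$. Synchronous: $T\models_s F\varphi$ iff $\exists k$: $T[k,\infty)\models_s\varphi$; $G$: $\forall k$; $T\models_s\psi U\varphi$ iff $\exists k$: $T[k,\infty)\models_s\varphi$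 and $\forall k'<k$: $T[k',\infty)\models_s\psi$; $T\models_s\psi R\varphi$ iff $\forall k$: $T[k,\infty)\models_s\varphi$ or $\exists k'<k$: $T[k',\infty)\models_s\psi$. Asynchronous: $T\models_a F\varphi$ iff $\exists k:T\to\mathbb N$ with $T[k]\models_a\varphi$; $T\models_a G\varphi$ iff $T[k]\models_a\varphi$ for all $k$; $T\models_a\psi U\varphi$ iff there is $k$ with $T[k]\models_a\varphi$ such that for $T_>=\{t:k(t)>0\}$ and all $k':T_>\to\mathbb N$, $k'<k$ pointwise, $\{t[k'(t),\infty):t\in T_>\}\models_a\psi$; $T\models_a\psi R\varphi$ iff for every $k:T\to\mathbb N$ there are $T_1\cup T_2=T$ with $\{t[k(t),\infty):t\in T_1\}\models_a\varphi$ and some $k':T_2\to\mathbb N$, $k'<k$ pointwise, with $\{t[k'(t),\infty):t\in T_2\}\models_a\psi$. HyperLTL: formulas $\phi::=\exists\pi.\phi\mid\forall\pi.\phi\mid\psi$, $\psi::=p_\pi\mid\neg\psi\mid\psi\vee\psi\mid X\psi\mid\psi U\psi$; sentences have no free trace variables. For a team $T$ and partial assignment $\Pi$ of trace variables to traces ($\Pi^i$ maps $\pi$ to $\Pi(\pi)[i,\infty)$): $(T,\Pi)\models p_\pi$ iff $p\in\Pi(\pi)(0)$; $\neg,\vee$ classical; $(T,\Pi)\models X\psi$ iff $(T,\Pi^1)\models\psi$; $(T,\Pi)\models\psi_1U\psi_2$ iff $\exists k$: $(T,\Pi^k)\models\psi_2$ and $\forall k'<k$: $(T,\Pi^{k'})\models\psi_1$;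 $(T,\Pi)\models\exists\pi.\psi$ iff for some $t\in T$, $(T,\Pi[\pi\mapsto t])\models\psi$; $\forall$ dually; $T\models\phi$ iff $(T,\Pi_\emptyset)\models\phi$. *)

theory Defs
  imports Main
begin

(* Atomic propositions: a finite type 'a (types are nonempty, so AP is nonempty). *)
type_synonym 'a trace = "nat \<Rightarrow> 'a set"
type_synonym 'a team = "'a trace set"

definition suffix :: "nat \<Rightarrow> 'a trace \<Rightarrow> 'a trace" where
  "suffix i t = (\<lambda>n. t (n + i))"

definition tshift :: "nat \<Rightarrow> 'a team \<Rightarrow> 'a team" where
  "tshift i T = suffix i ` T"

definition tshiftf :: "('a trace \<Rightarrow> nat) \<Rightarrow> 'a team \<Rightarrow> 'a team" where
  "tshiftf k T = (\<lambda>t. suffix (k t) t) ` T"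

datatype 'a ltl =
    Prop 'a | NProp 'a
  | And "'a ltl" "'a ltl" | Or "'a ltl" "'a ltl"
  | Next "'a ltl" | Fin "'a ltl" | Glob "'a ltl"
  | Until "'a ltl" "'a ltl" | Release "'a ltl" "'a ltl"

fun sat_s :: "'a team \<Rightarrow> 'a ltl \<Rightarrow> bool" where
  "sat_s T (Prop p) = (\<forall>t\<in>T. p \<in> t 0)"
| "sat_s T (NProp p) = (\<forall>t\<in>T. p \<notin> t 0)"
| "sat_s T (And a b) = (sat_s T a \<and> sat_s T b)"
| "sat_s T (Or a b) = (\<exists>T1 T2. T = T1 \<union> T2 \<and> sat_s T1 a \<and> sat_s T2 b)"
| "sat_s T (Next a) = sat_s (tshift 1 T) a"
| "sat_s T (Fin a) = (\<exists>k. sat_s (tshift k T) a)"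
| "sat_s T (Glob a) = (\<forall>k. sat_s (tshift k T) a)"
| "sat_s T (Until a b) = (\<exists>k. sat_s (tshift k T) b \<and> (\<forall>k'<k. sat_s (tshift k' T) a))"
| "sat_s T (Release a b) = (\<forall>k. sat_s (tshift k T) b \<or> (\<exists>k'<k. sat_s (tshift k' T) a))"

fun sat_a :: "'a team \<Rightarrow> 'a ltl \<Rightarrow> bool" where
  "sat_a T (Prop p) = (\<forall>t\<in>T. p \<in> t 0)"
| "sat_a T (NProp p) = (\<forall>t\<in>T. p \<notin> t 0)"
| "sat_a T (And a b) = (sat_a T a \<and> sat_a T b)"
| "sat_a T (Or a b) = (\<exists>T1 T2. T = T1 \<union> T2 \<and> sat_a T1 a \<and> sat_a T2 b)"
| "sat_a T (Next a) = sat_a (tshift 1 T) a"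
| "sat_a T (Fin a) = (\<exists>k. sat_a (tshiftf k T) a)"
| "sat_a T (Glob a) = (\<forall>k. sat_a (tshiftf k T) a)"
| "sat_a T (Until a b) =
     (\<exists>k. sat_a (tshiftf k T) b \<and>
        (\<forall>k'. (\<forall>t\<in>{t\<in>T. k t > 0}. k' t < k t) \<longrightarrow>
              sat_a (tshiftf k' {t\<in>T. k t > 0}) a))"
| "sat_a T (Release a b) =
     (\<forall>k. \<exists>T1 T2. T1 \<union> T2 = T \<and> sat_a (tshiftf k T1) b \<and>
        (\<exists>k'. (\<forall>t\<in>T2. k' t < k t) \<and> sat_a (tshiftf k' T2) a))"

type_synonym tvar = nat

datatype 'a hbody =
    HProp 'a tvar | HNot "'a hbody" | HOr "'a hbody" "'a hbody"
  | HNext "'a hbody" | HUntil "'a hbody" "'a hbody"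

datatype 'a hyper =
    HEx tvar "'a hyper" | HAll tvar "'a hyper" | HBody "'a hbody"

type_synonym 'a assign = "tvar \<Rightarrow> 'a trace option"

definition ashift :: "nat \<Rightarrow> 'a assign \<Rightarrow> 'a assign" where
  "ashift i \<Pi> = (\<lambda>\<pi>. map_option (suffix i) (\<Pi> \<pi>))"

fun hbsat :: "'a assign \<Rightarrow> 'a hbody \<Rightarrow> bool" where
  "hbsat \<Pi> (HProp p \<pi>) = (case \<Pi> \<pi> of Some t \<Rightarrow> p \<in> t 0 | None \<Rightarrow> False)"
| "hbsat \<Pi> (HNot a) = (\<not> hbsat \<Pi> a)"
| "hbsat \<Pi> (HOr a b) = (hbsat \<Pi> a \<or> hbsat \<Pi> b)"
| "hbsat \<Pi> (HNext a) = hbsat (ashift 1 \<Pi>) a"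
| "hbsat \<Pi> (HUntil a b) = (\<exists>k. hbsat (ashift k \<Pi>) b \<and> (\<forall>k'<k. hbsat (ashift k' \<Pi>) a))"

fun hsat :: "'a team \<Rightarrow> 'a assign \<Rightarrow> 'a hyper \<Rightarrow> bool" where
  "hsat T \<Pi> (HEx \<pi> f) = (\<exists>t\<in>T. hsat T (\<Pi>(\<pi> := Some t)) f)"
| "hsat T \<Pi> (HAll \<pi> f) = (\<forall>t\<in>T. hsat T (\<Pi>(\<pi> := Some t)) f)"
| "hsat T \<Pi> (HBody b) = hbsat \<Pi> b"

fun hbfree :: "'a hbody \<Rightarrow> tvar set" where
  "hbfree (HProp p \<pi>) = {\<pi>}"
| "hbfree (HNot a) = hbfree a"
| "hbfree (HOr a b) = hbfree a \<union> hbfree b"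
| "hbfree (HNext a) = hbfree a"
| "hbfree (HUntil a b) = hbfree a \<union> hbfree b"

fun hfree :: "'a hyper \<Rightarrow> tvar set" where
  "hfree (HEx \<pi> f) = hfree f - {\<pi>}"
| "hfree (HAll \<pi> f) = hfree f - {\<pi>}"
| "hfree (HBody b) = hbfree b"

definition sentence :: "'a hyper \<Rightarrow> bool" where
  "sentence f \<longleftrightarrow> hfree f = {}"

definition hmodels :: "'a team \<Rightarrow> 'a hyper \<Rightarrow> bool" where
  "hmodels T f = hsat T (\<lambda>_. None) f"

definition equiv_s :: "'a hyper \<Rightarrow> 'a ltl \<Rightarrow> bool" where
  "equiv_s f g \<longleftrightarrow> (\<forall>T. hmodels T f \<longleftrightarrow> sat_s T g)"

definition equiv_a :: "'a hyper \<Rightarrow> 'a ltl \<Rightarrow> bool" where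
  "equiv_a f g \<longleftrightarrow> (\<forall>T. hmodels T f \<longleftrightarrow> sat_a T g)"

end

theory Submission
  imports Defs
begin


type_synonym word = "nat \<Rightarrow> tvar set"

fun wsat :: "'a \<Rightarrow> word \<Rightarrow> 'a hbody \<Rightarrow> bool" where
  "wsat q w (HProp p \<pi>) = (p = q \<and> \<pi> \<notin> w 0)"
| "wsat q w (HNot a) = (\<not> wsat q w a)"
| "wsat q w (HOr a b) = (wsat q w a \<or> wsat q w b)"
| "wsat q w (HNext a) = wsat q (suffix 1 w) a"
| "wsat q w (HUntil a b) = (\<exists>k. wsat q (suffix k w) b \<and> (\<forall>j<k. wsat q (suffix j w) a))"

fun depth :: "'a hbody \<Rightarrow> nat" where
  "depth (HProp p \<pi>) = 0"
| "depth (HNot a) = depth a"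
| "depth (HOr a b) = max (depth a) (depth b)"
| "depth (HNext a) = Suc (depth a)"
| "depth (HUntil a b) = Suc (max (depth a) (depth b))"

definition eqv :: "'a \<Rightarrow> nat \<Rightarrow> word \<Rightarrow> word \<Rightarrow> bool" where
  "eqv q d w w' \<longleftrightarrow> (\<forall>\<phi>::'a hbody. depth \<phi> \<le> d \<longrightarrow> (wsat q w \<phi> \<longleftrightarrow> wsat q w' \<phi>))"

definition app :: "tvar set list \<Rightarrow> word \<Rightarrow> word" where
  "app v w = (\<lambda>k. if k < length v then v ! k else w (k - length v))"

definition pw :: "'b list \<Rightarrow> nat \<Rightarrow> 'b list" where
  "pw u n = concat (replicate n u)"

lemma suffix_0[simp]: "suffix 0 w = w" by (simp add: suffix_def)
lemma suffix_suffix[simp]: "suffix i (suffix j t) = suffix (i + j) t"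
  by (auto simp: suffix_def add.assoc add.commute add.left_commute)
lemma suffix_apply[simp]: "suffix i t k = t (k + i)" by (simp add: suffix_def)

lemma app_Nil[simp]: "app [] w = w" by (simp add: app_def)
lemma app_append: "app (u @ v) w = app u (app v w)"
  by (auto simp: app_def nth_append fun_eq_iff)
lemma app_0_Cons[simp]: "app (x # v) w 0 = x" by (simp add: app_def)
lemma suffix_app_le: "k \<le> length v \<Longrightarrow> suffix k (app v w) = app (drop k v) w"
  by (auto simp: app_def fun_eq_iff add.commute)
lemma suffix_app_ge: "suffix (length v + k) (app v w) = suffix k w"
  by (auto simp: app_def fun_eq_iff)
lemma suffix1_Cons: "suffix 1 (app (x # v) w) = app v w"
  using suffix_app_le[of 1 "x#v" w] by simp
lemma suffix1_Cons'[simp]: "suffix (Suc 0) (app (x # v) w) = app v w"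
  using suffix1_Cons by simp

lemma pw_0[simp]: "pw u 0 = []" by (simp add: pw_def)
lemma pw_Suc: "pw u (Suc n) = u @ pw u n" by (simp add: pw_def)
lemma pw_add: "pw u (a + b) = pw u a @ pw u b" by (simp add: pw_def replicate_add)
lemma length_pw[simp]: "length (pw u n) = n * length u" by (simp add: pw_def length_concat sum_list_replicate)

lemma wsat_Until_unfold:
  "wsat q w (HUntil a b) \<longleftrightarrow> wsat q w b \<or> (wsat q w a \<and> wsat q (suffix 1 w) (HUntil a b))"
proof
  assume "wsat q w (HUntil a b)"
  then obtain k where k: "wsat q (suffix k w) b" "\<forall>j<k. wsat q (suffix j w) a" by auto
  show "wsat q w b \<or> (wsat q w a \<and> wsat q (suffix 1 w) (HUntil a b))"
  proof (cases k)
    case 0 then show ?thesis using k by simp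
  next
    case (Suc k')
    then have "wsat q (suffix k' (suffix 1 w)) b" "\<forall>j<k'. wsat q (suffix j (suffix 1 w)) a"
      using k by (auto simp: add.commute)
    then show ?thesis using k Suc by auto
  qed
next
  assume "wsat q w b \<or> (wsat q w a \<and> wsat q (suffix 1 w) (HUntil a b))"
  then show "wsat q w (HUntil a b)"
  proof
    assume "wsat q w b" then show ?thesis by (auto intro!: exI[of _ 0])
  next
    assume H: "wsat q w a \<and> wsat q (suffix 1 w) (HUntil a b)"
    then obtain k where k: "wsat q (suffix (k+1) w) b" "\<forall>j<k. wsat q (suffix (j+1) w) a" by auto
    have "\<forall>j<Suc k. wsat q (suffix j w) a"
    proof (intro allI impI)
      fix j assume "j < Suc k"
      then show "wsat q (suffix j w) a" using H k by (cases j) auto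
    qed
    then show ?thesis using k by (auto intro!: exI[of _ "Suc k"])
  qed
qed

lemma prefix_cong_aux:
  assumes E: "\<And>\<psi>::'a hbody. depth \<psi> \<le> d \<Longrightarrow> wsat q w \<psi> \<longleftrightarrow> wsat q w' \<psi>"
  shows "depth (\<phi>::'a hbody) \<le> d \<Longrightarrow> wsat q (app u w) \<phi> \<longleftrightarrow> wsat q (app u w') \<phi>"
proof (induction \<phi> arbitrary: u)
  case (HProp p \<pi>)
  show ?case
  proof (cases u)
    case Nil then show ?thesis using E[OF HProp.prems] by simp
  qed simp
next
  case (HNot a) then show ?case by simp
next
  case (HOr a b) then show ?case by simp
next
  case (HNext a)
  show ?case
  proof (cases u)
    case Nil then show ?thesis using E[OF HNext.prems] by simp
  next
    case (Cons x v)
    have "depth a \<le> d" using HNext.prems by simp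
    then have "wsat q (app v w) a \<longleftrightarrow> wsat q (app v w') a" by (rule HNext.IH)
    then show ?thesis using Cons by (simp add: suffix1_Cons)
  qed
next
  case (HUntil a b)
  have da: "depth a \<le> d" and db: "depth b \<le> d" using HUntil.prems by auto
  show ?case
  proof (induction u)
    case Nil then show ?case using E[OF HUntil.prems] by simp
  next
    case (Cons x v)
    have A: "wsat q (app (x#v) w) a \<longleftrightarrow> wsat q (app (x#v) w') a" by (rule HUntil.IH(1)[OF da])
    have B: "wsat q (app (x#v) w) b \<longleftrightarrow> wsat q (app (x#v) w') b" by (rule HUntil.IH(2)[OF db])
    have "wsat q (app (x#v) w) (HUntil a b) \<longleftrightarrow> wsat q (app (x#v) w) b \<or> (wsat q (app (x#v) w) a \<and> wsat q (app v w) (HUntil a b))"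
      by (subst wsat_Until_unfold) (simp only: suffix1_Cons)
    also have "\<dots> \<longleftrightarrow> wsat q (app (x#v) w') b \<or> (wsat q (app (x#v) w') a \<and> wsat q (app v w') (HUntil a b))"
      using A B Cons.IH by blast
    also have "\<dots> \<longleftrightarrow> wsat q (app (x#v) w') (HUntil a b)"
      by (subst (2) wsat_Until_unfold) (simp only: suffix1_Cons)
    finally show ?case .
  qed
qed

lemma prefix_cong: "eqv q d w w' \<Longrightarrow> eqv q d (app u w) (app u w')"
  unfolding eqv_def using prefix_cong_aux[of d q w w'] by blast


lemma sfx_v: "i \<le> length v \<Longrightarrow> suffix i (app v X) = app (drop i v) X"
  by (rule suffix_app_le)

lemma sfx_copy:
  assumes "j < n" "q \<le> length u"
  shows "suffix (length v + j * length u + q) (app v (app (pw u n) w)) = app (drop q u) (app (pw u (n - Suc j)) w)"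
proof -
  have pn: "pw u n = pw u j @ (u @ pw u (n - Suc j))"
    using assms(1) pw_add[of u j "Suc (n - Suc j)"] by (simp add: pw_Suc)
  have "suffix (length v + j * length u + q) (app v (app (pw u n) w))
      = suffix (j * length u + q) (app (pw u n) w)"
    using suffix_app_ge[of v "j * length u + q"] by (simp add: add.assoc)
  also have "\<dots> = suffix (length (pw u j) + q) (app (pw u j) (app u (app (pw u (n - Suc j)) w)))"
    by (simp add: pn app_append)
  also have "\<dots> = suffix q (app u (app (pw u (n - Suc j)) w))" by (rule suffix_app_ge)
  also have "\<dots> = app (drop q u) (app (pw u (n - Suc j)) w)" using assms(2) by (rule suffix_app_le)
  finally show ?thesis .
qed

lemma sfx_w: "suffix (length v + n * length u + t) (app v (app (pw u n) w)) = suffix t w"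
proof -
  have "suffix (length v + n * length u + t) (app v (app (pw u n) w)) = suffix (n * length u + t) (app (pw u n) w)"
    using suffix_app_ge[of v "n * length u + t"] by (simp add: add.assoc)
  also have "\<dots> = suffix t w" using suffix_app_ge[of "pw u n" t w] by simp
  finally show ?thesis .
qed

lemma pos_split:
  assumes "u \<noteq> []"
  obtains "i < length v"
  | j q where "j < n" "q < length u" "i = length v + j * length u + q"
  | t where "i = length v + n * length u + t"
proof -
  consider "i < length v" | "length v \<le> i" "i - length v < n * length u" | "length v + n * length u \<le> i" by linarith
  then show ?thesis
  proof cases
    case 1 then show ?thesis using that(1) by blast
  next
    case 2
    let ?i = "i - length v"
    have lu: "0 < length u" using assms by simp
    have "?i div length u < n"
      using 2(2) lu by (simp add: less_mult_imp_div_less)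
    moreover have "?i mod length u < length u" using lu by simp
    moreover have "i = length v + (?i div length u) * length u + ?i mod length u"
      using 2(1) by simp
    ultimately show ?thesis using that(2) by blast
  next
    case 3
    then show ?thesis using that(3)[of "i - (length v + n * length u)"] by simp
  qed
qed

lemma pos_less:
  assumes "j1 * l + q1 < j2 * l + (q2::nat)" "q1 < l" "q2 < l"
  shows "j1 < j2 \<or> (j1 = j2 \<and> q1 < q2)"
proof (rule ccontr)
  assume "\<not> ?thesis"
  then have "j2 < j1 \<or> (j1 = j2 \<and> q2 \<le> q1)" by auto
  then show False
  proof
    assume "j2 < j1"
    then have "Suc j2 \<le> j1" by simp
    then have "Suc j2 * l \<le> j1 * l" by (rule mult_le_mono1)
    then show False using assms by simp
  next
    assume "j1 = j2 \<and> q2 \<le> q1" then show False using assms by simp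
  qed
qed


lemma copy_lt: "jj < (j::nat) \<Longrightarrow> q1 < l \<Longrightarrow> jj * l + q1 < j * l + q2"
proof -
  assume a: "jj < j" "q1 < l"
  have "Suc jj * l \<le> j * l" using a(1) by (intro mult_le_mono1) simp
  then show ?thesis using a(2) by simp
qed

lemma pump_dir:
  fixes PA PB :: "word \<Rightarrow> bool"
  assumes u: "u \<noteq> []" and n: "N' + 2 \<le> n" and n': "N' + 2 \<le> n'"
  and IHva: "\<And>i. i < length v \<Longrightarrow> PA (app (drop i v) (app (pw u n) w)) = PA (app (drop i v) (app (pw u n') w))"
  and IHvb: "\<And>i. i < length v \<Longrightarrow> PB (app (drop i v) (app (pw u n) w)) = PB (app (drop i v) (app (pw u n') w))"
  and IHca: "\<And>q r r'. q < length u \<Longrightarrow> N' \<le> r \<Longrightarrow> N' \<le> r' \<Longrightarrow>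
          PA (app (drop q u) (app (pw u r) w)) = PA (app (drop q u) (app (pw u r') w))"
  and IHcb: "\<And>q r r'. q < length u \<Longrightarrow> N' \<le> r \<Longrightarrow> N' \<le> r' \<Longrightarrow>
          PB (app (drop q u) (app (pw u r) w)) = PB (app (drop q u) (app (pw u r') w))"
  and Hb: "PB (suffix k (app v (app (pw u n) w)))"
  and Ha: "\<forall>i<k. PA (suffix i (app v (app (pw u n) w)))"
  shows "\<exists>k'. PB (suffix k' (app v (app (pw u n') w))) \<and> (\<forall>i<k'. PA (suffix i (app v (app (pw u n') w))))"
proof -
  define x where "x = app v (app (pw u n) w)"
  define x' where "x' = app v (app (pw u n') w)"
  define C where "C q r = app (drop q u) (app (pw u r) w)" for q r
  define lv where "lv = length v"
  define lu where "lu = length u"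
  have lu0: "0 < lu" using u by (simp add: lu_def)
  have sx: "\<And>j q. j < n \<Longrightarrow> q < lu \<Longrightarrow> suffix (lv + j * lu + q) x = C q (n - Suc j)"
    unfolding x_def C_def lv_def lu_def by (rule sfx_copy) auto
  have sx': "\<And>j q. j < n' \<Longrightarrow> q < lu \<Longrightarrow> suffix (lv + j * lu + q) x' = C q (n' - Suc j)"
    unfolding x'_def C_def lv_def lu_def by (rule sfx_copy) auto
  have Ha': "\<And>i. i < k \<Longrightarrow> PA (suffix i x)" using Ha unfolding x_def by auto
  have Acopy: "\<And>j q. j < n \<Longrightarrow> q < lu \<Longrightarrow> lv + j * lu + q < k \<Longrightarrow> PA (C q (n - Suc j))"
    using Ha' sx by metis
  have Av: "\<And>i. i < lv \<Longrightarrow> i < k \<Longrightarrow> PA (suffix i x')"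
  proof -
    fix i assume i: "i < lv" "i < k"
    have "PA (suffix i x)" using Ha' i(2) .
    then show "PA (suffix i x')" using IHva[of i] i(1)
      unfolding x_def x'_def lv_def by (simp add: sfx_v)
  qed
  have Adeep: "\<And>q. q < lu \<Longrightarrow> lv + lu \<le> k \<Longrightarrow> (\<forall>r. N' \<le> r \<longrightarrow> PA (C q r))"
  proof (intro allI impI)
    fix q r assume q: "q < lu" and k: "lv + lu \<le> k" and r: "N' \<le> r"
    have "PA (C q (n - Suc 0))" using Acopy[of 0 q] q k n by simp
    then show "PA (C q r)" using IHca[of q "n - Suc 0" r] q r n unfolding C_def lu_def by simp
  qed
  have main: "\<exists>k'. PB (suffix k' x') \<and> (\<forall>i<k'. PA (suffix i x'))"
  proof (cases rule: pos_split[where i=k and v=v and n=n, OF u])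
    case 1
    show ?thesis
    proof (intro exI conjI allI impI)
      show "PB (suffix k x')" using Hb IHvb[of k] 1 unfolding x_def x'_def by (simp add: sfx_v)
      fix i assume "i < k" then show "PA (suffix i x')" using Av 1 lv_def by auto
    qed
  next
    case (2 j q)
    note jq = 2
    have kpos: "k = lv + j * lu + q" using jq lv_def lu_def by simp
    have ql: "q < lu" using jq lu_def by simp
    show ?thesis
    proof (cases "n - Suc j < N'")
      case True
      define r where "r = n - Suc j"
      define j' where "j' = n' - Suc r"
      have j'n: "j' < n'" using True n' unfolding j'_def r_def by simp
      have rj': "n' - Suc j' = r" using True n' unfolding j'_def r_def by simp
      have j1: "1 \<le> j" using True n jq(1) unfolding r_def by simp
      show ?thesis
      proof (intro exI conjI allI impI)
        show "PB (suffix (lv + j' * lu + q) x')"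
          using Hb sx[OF jq(1) ql] sx'[OF j'n ql] rj' kpos unfolding x_def r_def by simp
        fix i assume i: "i < lv + j' * lu + q"
        show "PA (suffix i x')"
        proof (cases rule: pos_split[where i=i and v=v and n=n', OF u])
          case 1 then show ?thesis using Av kpos lv_def by simp
        next
          case (2 j'' q'')
          have q'': "q'' < lu" using 2 lu_def by simp
          have ipos: "i = lv + j'' * lu + q''" using 2 lv_def lu_def by simp
          have "j'' < j' \<or> (j'' = j' \<and> q'' < q)" using i ipos q'' ql by (intro pos_less[of _ lu]) auto
          then show ?thesis
          proof
            assume a: "j'' < j'"
            define r'' where "r'' = n' - Suc j''"
            have rr: "r < r''" using a j'n rj' unfolding r''_def by simp
            show ?thesis
            proof (cases "r'' < N'")
              case True
              define jj where "jj = n - Suc r''"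
              have jjn: "jj < n" using True n unfolding jj_def by simp
              have jjj: "jj < j" using rr True n jq(1) unfolding jj_def r_def by simp
              have "PA (C q'' (n - Suc jj))"
                using Acopy[OF jjn q''] copy_lt[OF jjj q'', of q] kpos by simp
              moreover have "n - Suc jj = r''" using True n unfolding jj_def by simp
              ultimately show ?thesis using sx'[OF 2(1) q''] ipos unfolding r''_def by simp
            next
              case False
              have "lu \<le> j * lu" using j1 mult_le_mono1[of 1 j lu] by simp
              then have "lv + lu \<le> k" using kpos by linarith
              then have "PA (C q'' r'')" using Adeep[OF q''] False by simp
              then show ?thesis using sx'[OF 2(1) q''] ipos unfolding r''_def by simp
            qed
          next
            assume a: "j'' = j' \<and> q'' < q"
            have "PA (C q'' (n - Suc j))" using Acopy[OF jq(1) q''] a kpos by simp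
            then show ?thesis using sx'[OF 2(1) q''] ipos a rj' unfolding r_def by simp
          qed
        next
          case (3 t)
          have "lv + j' * lu + q < lv + n' * lu" using copy_lt[OF j'n ql, of 0] by simp
          then show ?thesis using i 3 lv_def lu_def by simp
        qed
      qed
    next
      case False
      define r where "r = n - Suc j"
      define j' where "j' = (if j = 0 then 0 else (1::nat))"
      have j'n: "j' < n'" using n' unfolding j'_def by simp
      have r': "N' \<le> n' - Suc j'" using n' unfolding j'_def by (simp; linarith)
      show ?thesis
      proof (intro exI conjI allI impI)
        have "PB (C q r)" using Hb sx[OF jq(1) ql] kpos unfolding x_def r_def by simp
        then have "PB (C q (n' - Suc j'))" using IHcb[of q r "n' - Suc j'"] False r' ql
          unfolding C_def r_def lu_def by simp
        then show "PB (suffix (lv + j' * lu + q) x')" using sx'[OF j'n ql] by simp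
        fix i assume i: "i < lv + j' * lu + q"
        show "PA (suffix i x')"
        proof (cases rule: pos_split[where i=i and v=v and n=n', OF u])
          case 1 then show ?thesis using Av kpos lv_def by simp
        next
          case (2 j'' q'')
          have q'': "q'' < lu" using 2 lu_def by simp
          have ipos: "i = lv + j'' * lu + q''" using 2 lv_def lu_def by simp
          have "j'' < j' \<or> (j'' = j' \<and> q'' < q)" using i ipos q'' ql by (intro pos_less[of _ lu]) auto
          then show ?thesis
          proof
            assume a: "j'' < j'"
            then have j0: "j'' = 0" "j \<noteq> 0" unfolding j'_def by (auto split: if_splits)
            have "lu \<le> j * lu" using j0(2) mult_le_mono1[of 1 j lu] by simp
            then have "lv + lu \<le> k" using kpos by linarith
            then have "PA (C q'' (n' - Suc j''))" using Adeep[OF q''] n' j0(1) by simp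
            then show ?thesis using sx'[OF 2(1) q''] ipos by simp
          next
            assume a: "j'' = j' \<and> q'' < q"
            have "PA (C q'' r)" using Acopy[OF jq(1) q''] a kpos unfolding r_def by simp
            then have "PA (C q'' (n' - Suc j'))" using IHca[of q'' r "n' - Suc j'"] False r' q''
              unfolding C_def r_def lu_def by simp
            then show ?thesis using sx'[OF 2(1) q''] ipos a by simp
          qed
        next
          case (3 t)
          have "lv + j' * lu + q < lv + n' * lu" using copy_lt[OF j'n ql, of 0] by simp
          then show ?thesis using i 3 lv_def lu_def by simp
        qed
      qed
    qed
  next
    case (3 t)
    have kpos: "k = lv + n * lu + t" using 3 lv_def lu_def by simp
    show ?thesis
    proof (intro exI conjI allI impI)
      show "PB (suffix (lv + n' * lu + t) x')"
        using Hb kpos sfx_w[of v n u t w] sfx_w[of v n' u t w] unfolding x_def x'_def lv_def lu_def by simp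
      fix i assume i: "i < lv + n' * lu + t"
      show "PA (suffix i x')"
      proof (cases rule: pos_split[where i=i and v=v and n=n', OF u])
        case 1 then show ?thesis using Av kpos lv_def by simp
      next
        case (2 j'' q'')
        have q'': "q'' < lu" using 2 lu_def by simp
        have ipos: "i = lv + j'' * lu + q''" using 2 lv_def lu_def by simp
        define r'' where "r'' = n' - Suc j''"
        show ?thesis
        proof (cases "r'' < N'")
          case True
          define jj where "jj = n - Suc r''"
          have jjn: "jj < n" using True n unfolding jj_def by simp
          have "lv + jj * lu + q'' < k" using copy_lt[OF jjn q'', of t] kpos by simp
          then have "PA (C q'' (n - Suc jj))" using Acopy[OF jjn q''] by simp
          moreover have "n - Suc jj = r''" using True n unfolding jj_def by simp
          ultimately show ?thesis using sx'[OF 2(1) q''] ipos unfolding r''_def by simp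
        next
          case False
          have "lu \<le> n * lu" using n mult_le_mono1[of 1 n lu] by simp
          then have "lv + lu \<le> k" using kpos by linarith
          then have "PA (C q'' r'')" using Adeep[OF q''] False by simp
          then show ?thesis using sx'[OF 2(1) q''] ipos unfolding r''_def by simp
        qed
      next
        case (3 t'')
        have tt: "t'' < t" using i 3 lv_def lu_def by simp
        have "PA (suffix (lv + n * lu + t'') x)" using Ha' kpos tt by simp
        then show ?thesis using 3 sfx_w[of v n u t'' w] sfx_w[of v n' u t'' w]
          unfolding x_def x'_def lv_def lu_def by simp
      qed
    qed
  qed
  then show ?thesis unfolding x'_def .
qed


lemma app_pw_Suc: "app (pw u (Suc n)) w = app u (app (pw u n) w)"
  by (simp add: pw_Suc app_append)

lemma pump:
  assumes u: "u \<noteq> []"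
  shows "2 * depth \<phi> + 1 \<le> n \<Longrightarrow> 2 * depth \<phi> + 1 \<le> n' \<Longrightarrow>
    wsat q (app v (app (pw u n) w)) \<phi> = wsat q (app v (app (pw u n') w)) \<phi>"
proof (induction \<phi> arbitrary: v n n')
  case (HProp p \<pi>)
  obtain y u' where yu: "u = y # u'" using u by (cases u) auto
  obtain m where m: "n = Suc m" using HProp by (cases n) auto
  obtain m' where m': "n' = Suc m'" using HProp by (cases n') auto
  show ?case
  proof (cases v)
    case Nil then show ?thesis using m m' yu by (simp add: app_pw_Suc)
  next
    case (Cons x v') then show ?thesis by simp
  qed
next
  case (HNot a)
  have "wsat q (app v (app (pw u n) w)) a = wsat q (app v (app (pw u n') w)) a"
    using HNot.prems by (intro HNot.IH) auto
  then show ?case by simp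
next
  case (HOr a b)
  have "wsat q (app v (app (pw u n) w)) a = wsat q (app v (app (pw u n') w)) a"
    using HOr.prems by (intro HOr.IH(1)) auto
  moreover have "wsat q (app v (app (pw u n) w)) b = wsat q (app v (app (pw u n') w)) b"
    using HOr.prems by (intro HOr.IH(2)) auto
  ultimately show ?case by simp
next
  case (HNext a)
  show ?case
  proof (cases v)
    case (Cons x v')
    have "wsat q (app v' (app (pw u n) w)) a = wsat q (app v' (app (pw u n') w)) a"
      using HNext.prems by (intro HNext.IH) auto
    then show ?thesis using Cons by simp
  next
    case Nil
    obtain y u' where yu: "u = y # u'" using u by (cases u) auto
    obtain m where m: "n = Suc m" using HNext.prems by (cases n) auto
    obtain m' where m': "n' = Suc m'" using HNext.prems by (cases n') auto
    have "wsat q (app u' (app (pw u m) w)) a = wsat q (app u' (app (pw u m') w)) a"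
      using HNext.prems m m' by (intro HNext.IH) auto
    then show ?thesis using Nil m m' yu by (simp add: app_pw_Suc)
  qed
next
  case (HUntil a b)
  define N' where "N' = 2 * max (depth a) (depth b) + 1"
  have n: "N' + 2 \<le> n" and n': "N' + 2 \<le> n'" using HUntil.prems unfolding N'_def by auto
  have IHa: "\<And>v m m'. N' \<le> m \<Longrightarrow> N' \<le> m' \<Longrightarrow>
      wsat q (app v (app (pw u m) w)) a = wsat q (app v (app (pw u m') w)) a"
    by (rule HUntil.IH(1)) (auto simp: N'_def)
  have IHb: "\<And>v m m'. N' \<le> m \<Longrightarrow> N' \<le> m' \<Longrightarrow>
      wsat q (app v (app (pw u m) w)) b = wsat q (app v (app (pw u m') w)) b"
    by (rule HUntil.IH(2)) (auto simp: N'_def)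
  have dir: "\<And>m m'. N' + 2 \<le> m \<Longrightarrow> N' + 2 \<le> m' \<Longrightarrow>
     wsat q (app v (app (pw u m) w)) (HUntil a b) \<Longrightarrow> wsat q (app v (app (pw u m') w)) (HUntil a b)"
  proof -
    fix m m' assume m: "N' + 2 \<le> m" and m': "N' + 2 \<le> m'"
      and H: "wsat q (app v (app (pw u m) w)) (HUntil a b)"
    then obtain k where k: "wsat q (suffix k (app v (app (pw u m) w))) b"
       "\<forall>i<k. wsat q (suffix i (app v (app (pw u m) w))) a" by auto
    have "\<exists>k'. wsat q (suffix k' (app v (app (pw u m') w))) b \<and> (\<forall>i<k'. wsat q (suffix i (app v (app (pw u m') w))) a)"
    proof (rule pump_dir[OF u m m', where PA = "\<lambda>s. wsat q s a" and PB = "\<lambda>s. wsat q s b"])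
      show "\<And>i. wsat q (app (drop i v) (app (pw u m) w)) a = wsat q (app (drop i v) (app (pw u m') w)) a"
        by (rule IHa) (use m m' in linarith)+
      show "\<And>i. wsat q (app (drop i v) (app (pw u m) w)) b = wsat q (app (drop i v) (app (pw u m') w)) b"
        by (rule IHb) (use m m' in linarith)+
      show "\<And>qq r r'. N' \<le> r \<Longrightarrow> N' \<le> r' \<Longrightarrow> wsat q (app (drop qq u) (app (pw u r) w)) a = wsat q (app (drop qq u) (app (pw u r') w)) a"
        by (rule IHa)
      show "\<And>qq r r'. N' \<le> r \<Longrightarrow> N' \<le> r' \<Longrightarrow> wsat q (app (drop qq u) (app (pw u r) w)) b = wsat q (app (drop qq u) (app (pw u r') w)) b"
        by (rule IHb)
      show "wsat q (suffix k (app v (app (pw u m) w))) b" by (rule k(1))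
      show "\<forall>i<k. wsat q (suffix i (app v (app (pw u m) w))) a" by (rule k(2))
    qed
    then show "wsat q (app v (app (pw u m') w)) (HUntil a b)" by simp
  qed
  show ?case using dir[OF n n'] dir[OF n' n] by blast
qed


definition fe :: "'a \<Rightarrow> nat \<Rightarrow> tvar set list \<Rightarrow> tvar set list \<Rightarrow> bool" where
  "fe q d u u' \<longleftrightarrow> (\<forall>w. eqv q d (app u w) (app u' w))"

lemma fe_refl: "fe q d u u" by (simp add: fe_def eqv_def)
lemma fe_sym: "fe q d u u' \<Longrightarrow> fe q d u' u" by (simp add: fe_def eqv_def)
lemma fe_trans: "fe q d u u' \<Longrightarrow> fe q d u' u'' \<Longrightarrow> fe q d u u''" by (simp add: fe_def eqv_def)

lemma fe_cong: "fe q d u u' \<Longrightarrow> fe q d (x @ u @ y) (x @ u' @ y)"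
  unfolding fe_def by (simp add: app_append prefix_cong)

lemma fe_app: "fe q d u u' \<Longrightarrow> fe q d v v' \<Longrightarrow> fe q d (u @ v) (u' @ v')"
proof -
  assume a: "fe q d u u'" "fe q d v v'"
  have "fe q d ([] @ u @ v) ([] @ u' @ v)" using fe_cong[OF a(1)] .
  moreover have "fe q d (u' @ v @ []) (u' @ v' @ [])" using fe_cong[OF a(2)] .
  ultimately show ?thesis by (auto intro: fe_trans[of q d "u @ v" "u' @ v" "u' @ v'"])
qed

lemma fe_pump: "u \<noteq> [] \<Longrightarrow> 2 * d + 1 \<le> n \<Longrightarrow> 2 * d + 1 \<le> n' \<Longrightarrow> fe q d (pw u n) (pw u n')"
  unfolding fe_def eqv_def
proof (intro allI impI)
  fix w and \<phi> :: "'a hbody"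
  assume "u \<noteq> []" "2 * d + 1 \<le> n" "2 * d + 1 \<le> n'" "depth \<phi> \<le> d"
  then show "wsat q (app (pw u n) w) \<phi> = wsat q (app (pw u n') w) \<phi>"
    using pump[of u \<phi> n n' q "[]" w] by simp
qed

fun P :: "nat \<Rightarrow> (nat \<Rightarrow> 'b) \<Rightarrow> nat \<Rightarrow> 'b list" where
  "P B c 0 = []"
| "P B c (Suc l) = pw (P B c l @ [c l]) (B - 1) @ P B c l"

lemma P_cong: "(\<forall>l<m. c l = c' l) \<Longrightarrow> P B c m = P B c' m"
  by (induction m) auto

lemma map_pw: "map f (pw u n) = pw (map f u) n"
  by (simp add: pw_def map_concat)

lemma map_P: "map f (P B c m) = P B (f \<circ> c) m"
  by (induction m) (auto simp: map_pw)

lemma pw_split: "pw U (a + Suc b) = pw U a @ U @ pw U b"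
proof -
  have "pw U (a + Suc b) = pw U (a + (1 + b))" by simp
  also have "\<dots> = pw U a @ pw U 1 @ pw U b" by (simp only: pw_add)
  finally show ?thesis by (simp add: pw_def)
qed

lemma Abs:
  assumes B: "2 * d + 2 \<le> B" and e: "c l = e"
  shows "l < j \<Longrightarrow> fe q d (P B c j @ [e] @ P B c j) (P B c j)"
proof (induction j)
  case 0 then show ?case by simp
next
  case (Suc j)
  define U where "U = P B c j @ [c j]"
  have Une: "U \<noteq> []" by (simp add: U_def)
  have PS: "P B c (Suc j) = pw U (B - 1) @ P B c j" by (simp add: U_def)
  obtain b where Bb: "B = Suc (Suc b)" proof -
    have "B = Suc (Suc (B - 2))" using B by simp
    then show ?thesis using that by blast
  qed
  have pwU: "pw U (B - 1) = U @ pw U b" using Bb by (simp add: pw_Suc)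
  show ?case
  proof (cases "j = l")
    case True
    have "P B c (Suc j) @ [e] @ P B c (Suc j) = (pw U (B - 1) @ U @ pw U (B - 1)) @ P B c j"
      using True e by (simp add: PS U_def)
    then have eqA: "P B c (Suc j) @ [e] @ P B c (Suc j) = pw U (B - 1 + Suc (B - 1)) @ P B c j"
      by (simp only: pw_split)
    have feA: "fe q d (pw U (B - 1 + Suc (B - 1)) @ P B c j) (pw U (B - 1) @ P B c j)"
      by (rule fe_app[OF fe_pump[OF Une] fe_refl]) (use B in auto)
    have G: "fe q d (P B c (Suc j) @ [e] @ P B c (Suc j)) (pw U (B - 1) @ P B c j)"
      by (simp only: eqA feA)
    show ?thesis using G unfolding PS by assumption
  next
    case False
    then have lj: "l < j" using Suc.prems by simp
    have "P B c (Suc j) @ [e] @ P B c (Suc j) = pw U (B - 1) @ P B c j @ [e] @ pw U (B - 1) @ P B c j"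
      by (simp only: PS append_assoc)
    also have "\<dots> = pw U (B - 1) @ P B c j @ [e] @ (U @ pw U b) @ P B c j"
      by (subst (2) pwU) (rule refl)
    also have "\<dots> = pw U (B - 1) @ (P B c j @ [e] @ P B c j) @ ([c j] @ pw U b @ P B c j)"
      by (simp only: U_def append_assoc append.simps)
    finally have eq1: "P B c (Suc j) @ [e] @ P B c (Suc j) = pw U (B - 1) @ (P B c j @ [e] @ P B c j) @ ([c j] @ pw U b @ P B c j)" .
    have "pw U (B - 1) @ (P B c j) @ ([c j] @ pw U b @ P B c j) = (pw U (B - 1) @ U @ pw U b) @ P B c j"
      by (simp add: U_def)
    then have eq2: "pw U (B - 1) @ (P B c j) @ ([c j] @ pw U b @ P B c j) = pw U (B - 1 + Suc b) @ P B c j"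
      by (simp only: pw_split)
    have X: "fe q d (P B c (Suc j) @ [e] @ P B c (Suc j)) (pw U (B - 1) @ (P B c j) @ ([c j] @ pw U b @ P B c j))"
      unfolding eq1 by (rule fe_cong) (rule Suc.IH[OF lj])
    have Y: "fe q d (pw U (B - 1 + Suc b) @ P B c j) (pw U (B - 1) @ P B c j)"
      by (rule fe_app[OF fe_pump[OF Une] fe_refl]) (use B Bb in auto)
    have Z: "fe q d (P B c (Suc j) @ [e] @ P B c (Suc j)) (pw U (B - 1) @ P B c j)"
      by (rule fe_trans[OF X[unfolded eq2] Y])
    show ?thesis using Z unfolding PS by assumption
  qed
qed

lemma Abs_iter:
  assumes B: "2 * d + 2 \<le> B" and e: "c l = e" and lj: "l < j"
  shows "fe q d (pw (P B c j @ [e]) n @ P B c j) (P B c j)"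
proof (induction n)
  case 0 then show ?case by (simp add: fe_refl)
next
  case (Suc n)
  have "fe q d ((P B c j @ [e]) @ (pw (P B c j @ [e]) n @ P B c j) @ []) ((P B c j @ [e]) @ P B c j @ [])"
    by (rule fe_cong[OF Suc.IH])
  then have "fe q d (pw (P B c j @ [e]) (Suc n) @ P B c j) (P B c j @ [e] @ P B c j)"
    by (simp add: pw_Suc)
  then show ?case by (rule fe_trans[OF _ Abs[where c=c and l=l and e=e, OF B e lj]])
qed

lemma fe_pw_cong: "fe q d X Y \<Longrightarrow> fe q d (pw (X @ z) k @ X) (pw (Y @ z) k @ Y)"
proof (induction k)
  case 0 then show ?case by simp
next
  case (Suc k)
  have "fe q d ((X @ z) @ (pw (X @ z) k @ X)) ((Y @ z) @ (pw (Y @ z) k @ Y))"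
    by (rule fe_app[OF fe_app[OF Suc.prems fe_refl] Suc.IH[OF Suc.prems]])
  then show ?case by (simp add: pw_Suc)
qed

lemma Del:
  assumes B: "2 * d + 2 \<le> B" and e1: "c1 i0 = e" and el: "c1 l = e" and li: "l < i0"
  and c2: "\<And>k. c2 k = c1 (if k < i0 then k else Suc k)"
  shows "i0 \<le> m \<Longrightarrow> fe q d (P B c1 (Suc m)) (P B c2 m)"
proof (induction m)
  case 0
  then have "i0 = 0" by simp
  then show ?case using li by simp
next
  case (Suc m)
  show ?case
  proof (cases "i0 = Suc m")
    case True
    have eqP: "P B c2 (Suc m) = P B c1 (Suc m)" by (rule P_cong) (use True c2 in auto)
    have "fe q d (pw (P B c1 (Suc m) @ [e]) (B - 1) @ P B c1 (Suc m)) (P B c1 (Suc m))"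
      by (rule Abs_iter[where c=c1 and l=l and e=e, OF B el]) (use li True in simp)
    then show ?thesis using True e1 eqP by simp
  next
    case False
    then have im: "i0 \<le> m" using Suc.prems by simp
    have c2m: "c2 m = c1 (Suc m)" using c2 im by simp
    show ?thesis
      using fe_pw_cong[OF Suc.IH[OF im], of "[c1 (Suc m)]" "B - 1"] c2m by simp
  qed
qed



lemma set_P: "set (P B c m) \<subseteq> c ` {..<m}"
proof (induction m)
  case 0 then show ?case by simp
next
  case (Suc m)
  have "set (pw (P B c m @ [c m]) (B - 1)) \<subseteq> set (P B c m @ [c m])"
    by (auto simp: pw_def)
  then have "set (P B c (Suc m)) \<subseteq> insert (c m) (set (P B c m))" by auto
  moreover have "insert (c m) (set (P B c m)) \<subseteq> c ` {..<Suc m}" using Suc.IH by auto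
  ultimately show ?case by (rule order_trans)
qed

lemma in_P: "2 \<le> B \<Longrightarrow> l < m \<Longrightarrow> c l \<in> set (P B c m)"
proof (induction m)
  case 0 then show ?case by simp
next
  case (Suc m)
  obtain b where b: "B - Suc 0 = Suc b" using Suc.prems by (cases "B - Suc 0") auto
  have "set (P B c m @ [c m]) \<subseteq> set (P B c (Suc m))" by (simp add: b pw_Suc) blast
  then show ?case using Suc by (cases "l = m") auto
qed

definition tr_of :: "'a \<Rightarrow> ('i \<Rightarrow> nat \<Rightarrow> bool) \<Rightarrow> 'i \<Rightarrow> 'a trace" where
  "tr_of q ev i = (\<lambda>k. if ev i k then {} else {q})"

lemma tr_of_def': "tr_of q ev = (\<lambda>i k. if ev i k then {} else {q})"
  by (simp add: tr_of_def fun_eq_iff)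

definition word_ev :: "tvar set \<Rightarrow> ('i \<Rightarrow> nat \<Rightarrow> bool) \<Rightarrow> (tvar \<Rightarrow> 'i option) \<Rightarrow> word" where
  "word_ev V ev \<rho> = (\<lambda>k. {\<pi>\<in>V. case \<rho> \<pi> of None \<Rightarrow> True | Some i \<Rightarrow> ev i k})"

fun hbfree' :: "'a hbody \<Rightarrow> tvar set" where
  "hbfree' b = hbfree b"

lemma finite_hbfree: "finite (hbfree b)"
  by (induction b) auto

lemma hb_word:
  "hbfree b \<subseteq> V \<Longrightarrow> hbsat (\<lambda>\<pi>. map_option (tr_of q ev) (\<rho> \<pi>)) b = wsat q (word_ev V ev \<rho>) b"
proof (induction b arbitrary: ev)
  case (HProp p \<pi>)
  then show ?case by (cases "\<rho> \<pi>") (auto simp: word_ev_def tr_of_def)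
next
  case (HNot b) then show ?case by simp
next
  case (HOr b1 b2) then show ?case by simp
next
  case (HNext b)
  have A: "ashift 1 (\<lambda>\<pi>. map_option (tr_of q ev) (\<rho> \<pi>)) = (\<lambda>\<pi>. map_option (tr_of q (\<lambda>i j. ev i (j + 1))) (\<rho> \<pi>))"
    by (auto simp: ashift_def tr_of_def' suffix_def fun_eq_iff option.map_comp comp_def)
  have W: "suffix 1 (word_ev V ev \<rho>) = word_ev V (\<lambda>i j. ev i (j + 1)) \<rho>"
    by (auto simp: word_ev_def fun_eq_iff suffix_def split: option.splits)
  show ?case using HNext by (simp only: hbsat.simps wsat.simps A W) simp
next
  case (HUntil b1 b2)
  have A: "\<And>k. ashift k (\<lambda>\<pi>. map_option (tr_of q ev) (\<rho> \<pi>)) = (\<lambda>\<pi>. map_option (tr_of q (\<lambda>i j. ev i (j + k))) (\<rho> \<pi>))"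
    by (auto simp: ashift_def tr_of_def' suffix_def fun_eq_iff option.map_comp comp_def)
  have W: "\<And>k. suffix k (word_ev V ev \<rho>) = word_ev V (\<lambda>i j. ev i (j + k)) \<rho>"
    by (auto simp: word_ev_def fun_eq_iff suffix_def split: option.splits)
  have IH1: "\<And>k. hbsat (ashift k (\<lambda>\<pi>. map_option (tr_of q ev) (\<rho> \<pi>))) b1 = wsat q (suffix k (word_ev V ev \<rho>)) b1"
    unfolding A W using HUntil by simp
  have IH2: "\<And>k. hbsat (ashift k (\<lambda>\<pi>. map_option (tr_of q ev) (\<rho> \<pi>))) b2 = wsat q (suffix k (word_ev V ev \<rho>)) b2"
    unfolding A W using HUntil by simp
  show ?case by (simp only: hbsat.simps wsat.simps IH1 IH2)
qed


definition WW :: "nat \<Rightarrow> nat \<Rightarrow> nat list" where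
  "WW B L = P B id L @ [L]"

definition ev2 :: "nat \<Rightarrow> nat \<Rightarrow> nat \<times> nat \<Rightarrow> nat \<Rightarrow> bool" where
  "ev2 B L i k = (k div length (WW B L) = snd i \<and> WW B L ! (k mod length (WW B L)) = fst i)"

definition ev1 :: "nat \<Rightarrow> nat \<Rightarrow> nat \<times> nat \<Rightarrow> nat \<Rightarrow> bool" where
  "ev1 B L i k = (if k < length (WW B (Suc L)) then snd i = 0 \<and> WW B (Suc L) ! k = fst i
     else (k - length (WW B (Suc L))) div length (WW B L) + 1 = snd i \<and>
          WW B L ! ((k - length (WW B (Suc L))) mod length (WW B L)) = fst i)"

definition I1 :: "nat \<Rightarrow> nat \<Rightarrow> (nat \<times> nat) set" where
  "I1 L i0 = {(l, c). (c = 0 \<and> l \<le> Suc L \<and> l \<noteq> i0) \<or> (c \<noteq> 0 \<and> l \<le> L)}"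

definition I2 :: "nat \<Rightarrow> (nat \<times> nat) set" where
  "I2 L = {(l, c). l \<le> L}"

definition phi :: "nat \<Rightarrow> nat \<times> nat \<Rightarrow> nat \<times> nat" where
  "phi i0 i = (if snd i = 0 \<and> i0 < fst i then (fst i - 1, snd i) else i)"

lemma len_WW: "0 < length (WW B L)" by (simp add: WW_def)

lemma set_WW: "x \<in> set (WW B L) \<Longrightarrow> x \<le> L"
  using set_P[of B id L] by (auto simp: WW_def)

lemma phi_I: "i0 \<le> L \<Longrightarrow> phi i0 ` I1 L i0 = I2 L"
proof
  assume iL: "i0 \<le> L"
  show "phi i0 ` I1 L i0 \<subseteq> I2 L" using iL by (auto simp: phi_def I1_def I2_def)
  show "I2 L \<subseteq> phi i0 ` I1 L i0"
  proof
    fix i assume "i \<in> I2 L"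
    then obtain l c where i: "i = (l, c)" "l \<le> L" by (auto simp: I2_def)
    show "i \<in> phi i0 ` I1 L i0"
    proof (cases "c = 0 \<and> i0 \<le> l")
      case True
      then have "phi i0 (Suc l, 0) = i" "(Suc l, 0) \<in> I1 L i0" using i by (auto simp: phi_def I1_def)
      then show ?thesis by (metis image_eqI)
    next
      case False
      then have "phi i0 (l, c) = i" "(l, c) \<in> I1 L i0" using i iL by (auto simp: phi_def I1_def)
      then show ?thesis by (metis image_eqI)
    qed
  qed
qed

lemma eqv_words:
  fixes q :: 'a
  assumes B: "2 * d + 2 \<le> B" and iL: "i0 \<le> L" and V: "finite V" "card V < i0"
    and valid: "\<And>\<pi> i. \<rho> \<pi> = Some i \<Longrightarrow> i \<in> I1 L i0"
  shows "eqv q d (word_ev V (ev1 B L) \<rho>) (word_ev V (ev2 B L) (\<lambda>\<pi>. map_option (phi i0) (\<rho> \<pi>)))"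
proof -
  define m1 where "m1 = length (WW B (Suc L))"
  define m2 where "m2 = length (WW B L)"
  have m2: "0 < m2" using len_WW unfolding m2_def .
  define c1 where "c1 l = {\<pi>\<in>V. \<rho> \<pi> = None \<or> \<rho> \<pi> = Some (l, 0)}" for l
  define c2 where "c2 l = {\<pi>\<in>V. \<rho> \<pi> = None \<or> map_option (phi i0) (\<rho> \<pi>) = Some (l, 0)}" for l
  define R where "R k = {\<pi>\<in>V. case \<rho> \<pi> of None \<Rightarrow> True | Some i \<Rightarrow> k div m2 + 1 = snd i \<and> WW B L ! (k mod m2) = fst i}" for k
  define e where "e = {\<pi>\<in>V. \<rho> \<pi> = None}"
  have w1: "word_ev V (ev1 B L) \<rho> = app (map c1 (WW B (Suc L))) R"
  proof (rule ext)
    fix k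
    show "word_ev V (ev1 B L) \<rho> k = app (map c1 (WW B (Suc L))) R k"
    proof (cases "k < m1")
      case True
      have "\<And>x. (case \<rho> x of None \<Rightarrow> True | Some i \<Rightarrow> ev1 B L i k) \<longleftrightarrow> (\<rho> x = None \<or> \<rho> x = Some (WW B (Suc L) ! k, 0))"
      proof -
        fix x show "(case \<rho> x of None \<Rightarrow> True | Some i \<Rightarrow> ev1 B L i k) \<longleftrightarrow> (\<rho> x = None \<or> \<rho> x = Some (WW B (Suc L) ! k, 0))"
          using True unfolding m1_def by (cases "\<rho> x") (auto simp: ev1_def)
      qed
      then show ?thesis using True unfolding m1_def
        by (auto simp: word_ev_def app_def c1_def)
    next
      case False
      then show ?thesis unfolding m1_def
        by (auto simp: word_ev_def app_def ev1_def R_def m2_def split: option.splits)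
    qed
  qed
  have w2: "word_ev V (ev2 B L) (\<lambda>\<pi>. map_option (phi i0) (\<rho> \<pi>)) = app (map c2 (WW B L)) R"
  proof (rule ext)
    fix k
    show "word_ev V (ev2 B L) (\<lambda>\<pi>. map_option (phi i0) (\<rho> \<pi>)) k = app (map c2 (WW B L)) R k"
    proof (cases "k < m2")
      case True
      then have dm: "k div m2 = 0" "k mod m2 = k" by auto
      have "\<And>x. (case map_option (phi i0) (\<rho> x) of None \<Rightarrow> True | Some i \<Rightarrow> ev2 B L i k) \<longleftrightarrow>
          (\<rho> x = None \<or> map_option (phi i0) (\<rho> x) = Some (WW B L ! k, 0))"
      proof -
        fix x show "(case map_option (phi i0) (\<rho> x) of None \<Rightarrow> True | Some i \<Rightarrow> ev2 B L i k) \<longleftrightarrow>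
          (\<rho> x = None \<or> map_option (phi i0) (\<rho> x) = Some (WW B L ! k, 0))"
          using dm unfolding m2_def by (cases "\<rho> x") (auto simp: ev2_def prod_eq_iff)
      qed
      then show ?thesis using True unfolding m2_def
        by (auto simp: word_ev_def app_def c2_def)
    next
      case False
      then have dm: "k div m2 = (k - m2) div m2 + 1" and mm: "k mod m2 = (k - m2) mod m2"
        using m2 by (auto simp: le_div_geq le_mod_geq)
      have "\<And>i. ev2 B L (phi i0 i) k = ((k - m2) div m2 + 1 = snd i \<and> WW B L ! ((k - m2) mod m2) = fst i)"
        unfolding ev2_def m2_def[symmetric] dm mm by (auto simp: phi_def)
      then show ?thesis using False unfolding m2_def
        by (auto simp: word_ev_def app_def R_def m2_def split: option.splits)
    qed
  qed
  have c2c1: "c2 l = c1 (if l < i0 then l else Suc l)" for l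
  proof -
    have "\<And>\<pi>. map_option (phi i0) (\<rho> \<pi>) = Some (l, 0) \<longleftrightarrow> \<rho> \<pi> = Some (if l < i0 then l else Suc l, 0)"
    proof -
      fix \<pi>
      show "map_option (phi i0) (\<rho> \<pi>) = Some (l, 0) \<longleftrightarrow> \<rho> \<pi> = Some (if l < i0 then l else Suc l, 0)"
      proof (cases "\<rho> \<pi>")
        case None then show ?thesis by simp
      next
        case (Some i)
        then have "i \<in> I1 L i0" using valid by blast
        then show ?thesis using Some by (cases i) (auto simp: phi_def I1_def)
      qed
    qed
    then show ?thesis unfolding c1_def c2_def by auto
  qed
  have e1: "c1 i0 = e" unfolding c1_def e_def using valid by (auto simp: I1_def)
  obtain l where l: "l < i0" "c1 l = e"
  proof -
    define A where "A = {l. \<exists>\<pi>\<in>V. \<rho> \<pi> = Some (l, 0)}"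
    have sub: "A \<subseteq> (\<lambda>\<pi>. fst (the (\<rho> \<pi>))) ` V" unfolding A_def by force
    have fA: "finite A" by (rule finite_subset[OF sub finite_imageI[OF V(1)]])
    have "card A \<le> card ((\<lambda>\<pi>. fst (the (\<rho> \<pi>))) ` V)" by (rule card_mono[OF finite_imageI[OF V(1)] sub])
    also have "\<dots> \<le> card V" by (rule card_image_le[OF V(1)])
    finally have cA: "card A \<le> card V" .
    have "\<exists>l<i0. l \<notin> A"
    proof (rule ccontr)
      assume "\<not> ?thesis"
      then have "{..<i0} \<subseteq> A" by auto
      then have "card {..<i0} \<le> card A" using fA by (rule card_mono[rotated])
      then show False using cA V(2) by simp
    qed
    then obtain l where "l < i0" "l \<notin> A" by blast
    then show ?thesis using that[of l] unfolding A_def c1_def e_def by auto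
  qed
  have D: "fe q d (P B c1 (Suc L)) (P B c2 L)"
    by (rule Del[OF B e1 l(2) l(1) c2c1 iL])
  have "fe q d (P B c1 (Suc L) @ [c1 (Suc L)]) (P B c2 L @ [c2 L])"
    using fe_app[OF D fe_refl, of "[c1 (Suc L)]"] c2c1[of L] iL by simp
  moreover have "map c1 (WW B (Suc L)) = P B c1 (Suc L) @ [c1 (Suc L)]"
    by (simp only: WW_def map_append map_P comp_id list.map id_apply)
  moreover have "map c2 (WW B L) = P B c2 L @ [c2 L]"
    by (simp only: WW_def map_append map_P comp_id list.map id_apply)
  ultimately have "fe q d (map c1 (WW B (Suc L))) (map c2 (WW B L))" by simp
  then show ?thesis unfolding w1 w2 fe_def by blast
qed



fun body :: "'a hyper \<Rightarrow> 'a hbody" where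
  "body (HEx \<pi> f) = body f"
| "body (HAll \<pi> f) = body f"
| "body (HBody b) = b"

lemma lift:
  fixes q :: 'a and t1 t2 :: "nat \<times> nat \<Rightarrow> 'a trace" and ph :: "nat \<times> nat \<Rightarrow> nat \<times> nat"
  assumes onto: "ph ` I1' = I2'"
  and HB: "\<And>\<rho>. (\<forall>\<pi> i. \<rho> \<pi> = Some i \<longrightarrow> i \<in> I1') \<Longrightarrow>
     hbsat (\<lambda>\<pi>. map_option t1 (\<rho> \<pi>)) b = hbsat (\<lambda>\<pi>. map_option t2 (map_option ph (\<rho> \<pi>))) b"
  shows "body f = b \<Longrightarrow> (\<forall>\<pi> i. \<rho> \<pi> = Some i \<longrightarrow> i \<in> I1') \<Longrightarrow>
    hsat (t1 ` I1') (\<lambda>\<pi>. map_option t1 (\<rho> \<pi>)) f = hsat (t2 ` I2') (\<lambda>\<pi>. map_option t2 (map_option ph (\<rho> \<pi>))) f"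
proof (induction f arbitrary: \<rho>)
  case (HEx \<pi> f)
  have up1: "\<And>i. (\<lambda>\<pi>'. map_option t1 (\<rho> \<pi>'))(\<pi> := Some (t1 i)) = (\<lambda>\<pi>'. map_option t1 ((\<rho>(\<pi> := Some i)) \<pi>'))"
    by auto
  have up2: "\<And>i. (\<lambda>\<pi>'. map_option t2 (map_option ph (\<rho> \<pi>')))(\<pi> := Some (t2 (ph i))) = (\<lambda>\<pi>'. map_option t2 (map_option ph ((\<rho>(\<pi> := Some i)) \<pi>')))"
    by auto
  have IH: "\<And>i. i \<in> I1' \<Longrightarrow> hsat (t1 ` I1') (\<lambda>\<pi>'. map_option t1 ((\<rho>(\<pi> := Some i)) \<pi>')) f =
      hsat (t2 ` I2') (\<lambda>\<pi>'. map_option t2 (map_option ph ((\<rho>(\<pi> := Some i)) \<pi>'))) f"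
    using HEx by (intro HEx.IH) auto
  have "hsat (t1 ` I1') (\<lambda>\<pi>. map_option t1 (\<rho> \<pi>)) (HEx \<pi> f) \<longleftrightarrow>
     (\<exists>i\<in>I1'. hsat (t2 ` I2') (\<lambda>\<pi>'. map_option t2 (map_option ph ((\<rho>(\<pi> := Some i)) \<pi>'))) f)"
    using IH by (auto simp: up1)
  also have "\<dots> \<longleftrightarrow> (\<exists>i\<in>I1'. hsat (t2 ` I2') ((\<lambda>\<pi>. map_option t2 (map_option ph (\<rho> \<pi>)))(\<pi> := Some (t2 (ph i)))) f)"
    by (simp only: up2)
  also have "\<dots> \<longleftrightarrow> hsat (t2 ` I2') (\<lambda>\<pi>. map_option t2 (map_option ph (\<rho> \<pi>))) (HEx \<pi> f)"
    unfolding onto[symmetric] hsat.simps by blast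
  finally show ?case .
next
  case (HAll \<pi> f)
  have up1: "\<And>i. (\<lambda>\<pi>'. map_option t1 (\<rho> \<pi>'))(\<pi> := Some (t1 i)) = (\<lambda>\<pi>'. map_option t1 ((\<rho>(\<pi> := Some i)) \<pi>'))"
    by auto
  have up2: "\<And>i. (\<lambda>\<pi>'. map_option t2 (map_option ph (\<rho> \<pi>')))(\<pi> := Some (t2 (ph i))) = (\<lambda>\<pi>'. map_option t2 (map_option ph ((\<rho>(\<pi> := Some i)) \<pi>')))"
    by auto
  have IH: "\<And>i. i \<in> I1' \<Longrightarrow> hsat (t1 ` I1') (\<lambda>\<pi>'. map_option t1 ((\<rho>(\<pi> := Some i)) \<pi>')) f =
      hsat (t2 ` I2') (\<lambda>\<pi>'. map_option t2 (map_option ph ((\<rho>(\<pi> := Some i)) \<pi>'))) f"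
    using HAll by (intro HAll.IH) auto
  have "hsat (t1 ` I1') (\<lambda>\<pi>. map_option t1 (\<rho> \<pi>)) (HAll \<pi> f) \<longleftrightarrow>
     (\<forall>i\<in>I1'. hsat (t2 ` I2') (\<lambda>\<pi>'. map_option t2 (map_option ph ((\<rho>(\<pi> := Some i)) \<pi>'))) f)"
    using IH by (auto simp: up1)
  also have "\<dots> \<longleftrightarrow> (\<forall>i\<in>I1'. hsat (t2 ` I2') ((\<lambda>\<pi>. map_option t2 (map_option ph (\<rho> \<pi>)))(\<pi> := Some (t2 (ph i)))) f)"
    by (simp only: up2)
  also have "\<dots> \<longleftrightarrow> hsat (t2 ` I2') (\<lambda>\<pi>. map_option t2 (map_option ph (\<rho> \<pi>))) (HAll \<pi> f)"
    unfolding onto[symmetric] hsat.simps by blast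
  finally show ?case .
next
  case (HBody b')
  then show ?case using HB by simp
qed

lemma part2: "\<exists>g :: 'a ltl. \<forall>f. sentence f \<longrightarrow> \<not> equiv_s f g"
proof (intro exI allI impI)
  define q :: 'a where "q = undefined"
  fix f :: "'a hyper"
  define b where "b = body f"
  define V where "V = hbfree b"
  define d where "d = depth b"
  define i0 where "i0 = Suc (card V)"
  define L where "L = i0"
  define B where "B = 2 * d + 2"
  define T1 where "T1 = tr_of q (ev1 B L) ` I1 L i0"
  define T2 where "T2 = tr_of q (ev2 B L) ` I2 L"
  have B2: "2 \<le> B" unfolding B_def by simp
  have iL: "i0 \<le> L" unfolding L_def by simp
  have s1: "sat_s T1 (Fin (Prop q))"
  proof -
    have "i0 \<in> set (WW B (Suc L))" using in_P[OF B2, of i0 "Suc L" id] iL by (simp add: WW_def)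
    then obtain k where k: "k < length (WW B (Suc L))" "WW B (Suc L) ! k = i0"
      by (auto simp: in_set_conv_nth)
    have "\<forall>t\<in>T1. q \<in> t k"
    proof
      fix t assume "t \<in> T1"
      then obtain i where i: "i \<in> I1 L i0" "t = tr_of q (ev1 B L) i" unfolding T1_def by blast
      have "\<not> ev1 B L i k" using i(1) k by (cases i) (auto simp: ev1_def I1_def)
      then show "q \<in> t k" using i(2) by (simp add: tr_of_def)
    qed
    then show ?thesis by (auto simp: tshift_def intro!: exI[of _ k])
  qed
  have s2: "\<not> sat_s T2 (Fin (Prop q))"
  proof
    assume "sat_s T2 (Fin (Prop q))"
    then obtain k where k: "\<forall>t\<in>T2. q \<in> t k" by (auto simp: tshift_def)
    define i where "i = (WW B L ! (k mod length (WW B L)), k div length (WW B L))"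
    have "WW B L ! (k mod length (WW B L)) \<in> set (WW B L)" using len_WW by simp
    then have "i \<in> I2 L" using set_WW unfolding i_def I2_def by auto
    moreover have "ev2 B L i k" unfolding i_def ev2_def by simp
    ultimately show False using k unfolding T2_def by (auto simp: tr_of_def)
  qed
  have HB: "hbsat (\<lambda>\<pi>. map_option (tr_of q (ev1 B L)) (\<rho> \<pi>)) b =
      hbsat (\<lambda>\<pi>. map_option (tr_of q (ev2 B L)) (map_option (phi i0) (\<rho> \<pi>))) b"
    if valid: "\<forall>\<pi> i. \<rho> \<pi> = Some i \<longrightarrow> i \<in> I1 L i0" for \<rho>
  proof -
    have fV: "finite V" unfolding V_def by (rule finite_hbfree)
    have E: "eqv q d (word_ev V (ev1 B L) \<rho>) (word_ev V (ev2 B L) (\<lambda>\<pi>. map_option (phi i0) (\<rho> \<pi>)))"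
      by (rule eqv_words) (use valid fV iL in \<open>auto simp: B_def i0_def\<close>)
    have "hbsat (\<lambda>\<pi>. map_option (tr_of q (ev1 B L)) (\<rho> \<pi>)) b = wsat q (word_ev V (ev1 B L) \<rho>) b"
      by (rule hb_word) (simp add: V_def)
    also have "\<dots> = wsat q (word_ev V (ev2 B L) (\<lambda>\<pi>. map_option (phi i0) (\<rho> \<pi>))) b"
      using E unfolding eqv_def d_def by simp
    also have "\<dots> = hbsat (\<lambda>\<pi>. map_option (tr_of q (ev2 B L)) (map_option (phi i0) (\<rho> \<pi>))) b"
      by (rule hb_word[symmetric]) (simp add: V_def)
    finally show ?thesis .
  qed
  have "hsat T1 (\<lambda>\<pi>. map_option (tr_of q (ev1 B L)) ((\<lambda>_. None) \<pi>)) f =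
        hsat T2 (\<lambda>\<pi>. map_option (tr_of q (ev2 B L)) (map_option (phi i0) ((\<lambda>_. None) \<pi>))) f"
    unfolding T1_def T2_def
    by (rule lift[where b = b, OF phi_I[OF iL] HB]) (auto simp: b_def)
  then have hm: "hmodels T1 f = hmodels T2 f" by (simp add: hmodels_def)
  show "\<not> equiv_s f (Fin (Prop q))"
    using hm s1 s2 unfolding equiv_s_def by blast
qed



declare suffix_apply[simp del]

fun lsat :: "'a trace \<Rightarrow> 'a ltl \<Rightarrow> bool" where
  "lsat t (Prop p) = (p \<in> t 0)"
| "lsat t (NProp p) = (p \<notin> t 0)"
| "lsat t (And a b) = (lsat t a \<and> lsat t b)"
| "lsat t (Or a b) = (lsat t a \<or> lsat t b)"
| "lsat t (Next a) = lsat (suffix 1 t) a"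
| "lsat t (Fin a) = (\<exists>k. lsat (suffix k t) a)"
| "lsat t (Glob a) = (\<forall>k. lsat (suffix k t) a)"
| "lsat t (Until a b) = (\<exists>k. lsat (suffix k t) b \<and> (\<forall>j<k. lsat (suffix j t) a))"
| "lsat t (Release a b) = (\<forall>k. lsat (suffix k t) b \<or> (\<exists>j<k. lsat (suffix j t) a))"

lemma flat: "sat_a T g \<longleftrightarrow> (\<forall>t\<in>T. lsat t g)"
proof (induction g arbitrary: T)
  case (Or a b)
  show ?case
  proof
    assume "sat_a T (Or a b)"
    then show "\<forall>t\<in>T. lsat t (Or a b)" using Or by auto
  next
    assume H: "\<forall>t\<in>T. lsat t (Or a b)"
    have "T = {t\<in>T. lsat t a} \<union> {t\<in>T. lsat t b}" using H by auto
    moreover have "sat_a {t\<in>T. lsat t a} a" "sat_a {t\<in>T. lsat t b} b" using Or by auto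
    ultimately show "sat_a T (Or a b)" by (simp only: sat_a.simps) blast
  qed
next
  case (Next a)
  then show ?case by (simp add: tshift_def)
next
  case (Fin a)
  show ?case
  proof
    assume "sat_a T (Fin a)"
    then show "\<forall>t\<in>T. lsat t (Fin a)" using Fin by (auto simp: tshiftf_def)
  next
    assume H: "\<forall>t\<in>T. lsat t (Fin a)"
    define k where "k t = (SOME n. lsat (suffix n t) a)" for t
    have "\<forall>t\<in>T. lsat (suffix (k t) t) a" using H unfolding k_def by (auto intro: someI_ex)
    then show "sat_a T (Fin a)" using Fin by (auto simp: tshiftf_def intro!: exI[of _ k])
  qed
next
  case (Glob a)
  show ?case
  proof
    assume H: "sat_a T (Glob a)"
    show "\<forall>t\<in>T. lsat t (Glob a)"
    proof (intro ballI, simp, intro allI)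
      fix t n assume "t \<in> T"
      from H have "sat_a (tshiftf (\<lambda>_. n) T) a" by simp
      then show "lsat (suffix n t) a" using Glob \<open>t\<in>T\<close> by (auto simp: tshiftf_def)
    qed
  next
    assume "\<forall>t\<in>T. lsat t (Glob a)"
    then show "sat_a T (Glob a)" using Glob by (auto simp: tshiftf_def)
  qed
next
  case (Until a b)
  show ?case
  proof
    assume "sat_a T (Until a b)"
    then obtain k where kb: "sat_a (tshiftf k T) b" and
      ka: "\<And>k'. (\<forall>t\<in>{t\<in>T. k t > 0}. k' t < k t) \<Longrightarrow> sat_a (tshiftf k' {t\<in>T. k t > 0}) a"
      by auto
    show "\<forall>t\<in>T. lsat t (Until a b)"
    proof
      fix t assume tT: "t \<in> T"
      have b: "lsat (suffix (k t) t) b" using kb Until(2) tT by (auto simp: tshiftf_def)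
      have "\<forall>j<k t. lsat (suffix j t) a"
      proof (intro allI impI)
        fix j assume j: "j < k t"
        let ?k' = "\<lambda>s. if s = t then j else 0"
        have "sat_a (tshiftf ?k' {t\<in>T. k t > 0}) a" by (rule ka) (use j in auto)
        then show "lsat (suffix j t) a" using Until(1) tT j by (auto simp: tshiftf_def)
      qed
      with b show "lsat t (Until a b)" by auto
    qed
  next
    assume H: "\<forall>t\<in>T. lsat t (Until a b)"
    define k where "k t = (SOME n. lsat (suffix n t) b \<and> (\<forall>j<n. lsat (suffix j t) a))" for t
    have K: "\<forall>t\<in>T. lsat (suffix (k t) t) b \<and> (\<forall>j<k t. lsat (suffix j t) a)"
    proof
      fix t assume "t \<in> T"
      then have "\<exists>n. lsat (suffix n t) b \<and> (\<forall>j<n. lsat (suffix j t) a)" using H by auto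
      then show "lsat (suffix (k t) t) b \<and> (\<forall>j<k t. lsat (suffix j t) a)" unfolding k_def by (rule someI_ex)
    qed
    have 1: "sat_a (tshiftf k T) b" using K Until(2) by (auto simp: tshiftf_def)
    have 2: "sat_a (tshiftf k' {t\<in>T. k t > 0}) a" if "\<forall>t\<in>{t\<in>T. k t > 0}. k' t < k t" for k'
    proof -
      have "\<forall>s\<in>tshiftf k' {t\<in>T. k t > 0}. lsat s a"
      proof
        fix s assume "s \<in> tshiftf k' {t\<in>T. k t > 0}"
        then obtain t where "t \<in> T" "k t > 0" "s = suffix (k' t) t" by (auto simp: tshiftf_def)
        then show "lsat s a" using K that by auto
      qed
      then show ?thesis using Until(1) by blast
    qed
    show "sat_a T (Until a b)" using 1 2 by (simp only: sat_a.simps) blast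
  qed
next
  case (Release a b)
  show ?case
  proof
    assume H: "sat_a T (Release a b)"
    show "\<forall>t\<in>T. lsat t (Release a b)"
    proof (intro ballI, simp, intro allI)
      fix t n assume tT: "t \<in> T"
      have "\<exists>T1 T2. T1 \<union> T2 = T \<and> sat_a (tshiftf (\<lambda>_. n) T1) b \<and> (\<exists>k'. (\<forall>t\<in>T2. k' t < n) \<and> sat_a (tshiftf k' T2) a)"
        using H by (simp only: sat_a.simps)
      then obtain T1 T2 k' where "T1 \<union> T2 = T" "sat_a (tshiftf (\<lambda>_. n) T1) b"
        "\<forall>t\<in>T2. k' t < n" "sat_a (tshiftf k' T2) a" by blast
      then show "lsat (suffix n t) b \<or> (\<exists>j<n. lsat (suffix j t) a)"
        using tT Release by (auto simp: tshiftf_def)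
    qed
  next
    assume H: "\<forall>t\<in>T. lsat t (Release a b)"
    show "sat_a T (Release a b)"
    proof (simp, intro allI)
      fix k :: "'a trace \<Rightarrow> nat"
      define T1 where "T1 = {t\<in>T. lsat (suffix (k t) t) b}"
      define T2 where "T2 = T - T1"
      define k' where "k' t = (SOME j. j < k t \<and> lsat (suffix j t) a)" for t
      have K: "\<forall>t\<in>T2. k' t < k t \<and> lsat (suffix (k' t) t) a"
      proof
        fix t assume "t \<in> T2"
        then have "\<exists>j. j < k t \<and> lsat (suffix j t) a" using H unfolding T2_def T1_def by auto
        then show "k' t < k t \<and> lsat (suffix (k' t) t) a" unfolding k'_def by (rule someI_ex)
      qed
      have "T1 \<union> T2 = T" unfolding T1_def T2_def by auto
      moreover have "sat_a (tshiftf k T1) b" using Release unfolding T1_def by (auto simp: tshiftf_def)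
      moreover have "sat_a (tshiftf k' T2) a" using Release K by (auto simp: tshiftf_def)
      ultimately show "\<exists>T1 T2. T1 \<union> T2 = T \<and> sat_a (tshiftf k T1) b \<and> (\<exists>k'. (\<forall>t\<in>T2. k' t < k t) \<and> sat_a (tshiftf k' T2) a)"
        using K by blast
    qed
  qed
qed auto


definition TT :: "'a hbody" where "TT = HOr (HProp undefined 0) (HNot (HProp undefined 0))"

fun tr :: "'a ltl \<Rightarrow> 'a hbody" where
  "tr (Prop p) = HProp p 0"
| "tr (NProp p) = HNot (HProp p 0)"
| "tr (And a b) = HNot (HOr (HNot (tr a)) (HNot (tr b)))"
| "tr (Or a b) = HOr (tr a) (tr b)"
| "tr (Next a) = HNext (tr a)"
| "tr (Fin a) = HUntil TT (tr a)"
| "tr (Glob a) = HNot (HUntil TT (HNot (tr a)))"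
| "tr (Until a b) = HUntil (tr a) (tr b)"
| "tr (Release a b) = HNot (HUntil (HNot (tr a)) (HNot (tr b)))"


lemma ashift_ashift[simp]: "ashift i (ashift j Pa) = ashift (i + j) Pa"
  unfolding ashift_def by (auto simp: option.map_comp comp_def)

lemma TT_true: "Pa 0 = Some t \<Longrightarrow> hbsat Pa TT"
  by (simp add: TT_def)

lemma TT_true'[simp]: "ashift k Pa 0 = Some t \<Longrightarrow> hbsat (ashift k Pa) TT"
  by (simp add: TT_def)

lemma ashift_0: "Pa 0 = Some t \<Longrightarrow> ashift k Pa 0 = Some (suffix k t)"
  by (simp add: ashift_def)

lemma tr_correct: "Pa 0 = Some t \<Longrightarrow> hbsat Pa (tr g) \<longleftrightarrow> lsat t g"
proof (induction g arbitrary: Pa t)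
  case (Fin g)
  have A: "\<And>k. ashift k Pa 0 = Some (suffix k t)" using Fin.prems by (simp add: ashift_def)
  then show ?case using Fin.IH by auto
next
  case (Glob g)
  have A: "\<And>k. ashift k Pa 0 = Some (suffix k t)" using Glob.prems by (simp add: ashift_def)
  then show ?case using Glob.IH by auto
next
  case (Until g1 g2)
  have A: "\<And>k. ashift k Pa 0 = Some (suffix k t)" using Until.prems by (simp add: ashift_def)
  then show ?case using Until.IH by auto
next
  case (Release g1 g2)
  have A: "\<And>k. ashift k Pa 0 = Some (suffix k t)" using Release.prems by (simp add: ashift_def)
  then show ?case using Release.IH by auto
next
  case (Next g)
  have A: "\<And>k. ashift k Pa 0 = Some (suffix k t)" using Next.prems by (simp add: ashift_def)
  then show ?case using Next.IH by auto
qed auto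

lemma hbfree_tr: "hbfree (tr g) \<subseteq> {0}"
  by (induction g) (auto simp: TT_def)

lemma part3: "\<exists>f. sentence f \<and> equiv_a f g"
proof (intro exI conjI)
  show "sentence (HAll 0 (HBody (tr g)))" using hbfree_tr[of g] by (auto simp: sentence_def)
  show "equiv_a (HAll 0 (HBody (tr g))) g"
    unfolding equiv_a_def hmodels_def by (simp add: flat tr_correct)
qed

lemma empty_s: "sat_s {} g"
  by (induction g) (auto simp: tshift_def)

lemma empty_a: "sat_a {} g"
  by (induction g) (auto simp: tshiftf_def tshift_def)

lemma part1: "\<exists>f. sentence f \<and> (\<forall>g. \<not> equiv_s f g)"
proof (intro exI conjI allI)
  let ?f = "HEx 0 (HBody (HProp undefined 0))"
  show "sentence ?f" by (simp add: sentence_def)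
  fix g show "\<not> equiv_s ?f g" unfolding equiv_s_def hmodels_def using empty_s[of g] by auto
qed

lemma part4: "\<exists>f. sentence f \<and> (\<forall>g. \<not> equiv_a f g)"
proof (intro exI conjI allI)
  let ?f = "HEx 0 (HBody (HProp undefined 0))"
  show "sentence ?f" by (simp add: sentence_def)
  fix g show "\<not> equiv_a ?f g" unfolding equiv_a_def hmodels_def using empty_a[of g] by auto
qed


theorem mainTheorem16:
  shows "(\<exists>f :: ('a::finite) hyper. sentence f \<and> (\<forall>g. \<not> equiv_s f g)) \<and>
         (\<exists>g :: 'a ltl. \<forall>f. sentence f \<longrightarrow> \<not> equiv_s f g) \<and>
         (\<forall>g :: 'a ltl. \<exists>f. sentence f \<and> equiv_a f g) \<and>
         (\<exists>f :: 'a hyper. sentence f \<and> (\<forall>g. \<not> equiv_a f g))"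
    using part1 part2 part3 part4 by blast

end
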